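(* Let $r \geq 1$ be an integer. Then for every integer $n \geq 0$, $$\sum_{k=0}^{n} (-1)^k \frac{k!}{k+r}\, S(n,k) = \frac{1}{(r-1)!} \sum_{k=0}^{r-1} |s(r,k+1)|\, B_{n+k}.$$
   Context: For $n \geq 0$, $X^{\underline{n}} := X(X-1)\cdots(X-n+1)$ ($X^{\underline{0}}=1$). The (signed) Stirling numbers of the first kind $s(n,k)$ are defined by $X^{\underline{n}} = \sum_{k=0}^{n} s(n,k) X^k$, and the Stirling numbers of the second kind $S(n,k)$ by $X^n = \sum_{k=0}^{n} S(n,k) X^{\underline{k}}$ (for all $n\ge 0$), with $s(n,k)=S(n,k)=0$ when $n<k$. The Bernoulli numbers $B_n$ are defined by $\frac{t}{e^t-1} = \sum_{n\ge 0} B_n \frac{t^n}{n!}$. *)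

theory Defs
  imports "HOL-Combinatorics.Stirling" "HOL-Computational_Algebra.Formal_Power_Series"
begin

text \<open>Bernoulli numbers, defined by the exponential generating function
  t / (e^t - 1) = sum_n B_n t^n / n!  (so B_1 = -1/2).\<close>
definition bernoulli_egf :: "real fps" where
  "bernoulli_egf = fps_X / (fps_exp 1 - 1)"

definition bernoulli :: "nat \<Rightarrow> real" where
  "bernoulli n = fact n * fps_nth bernoulli_egf n"

text \<open>Signed Stirling numbers of the first kind, as in the paper:
  X(X-1)...(X-n+1) = sum_k s(n,k) X^k.  The library's unsigned
  stirling n k satisfies |s(n,k)| = stirling n k.\<close>
definition stirling1_signed :: "nat \<Rightarrow> nat \<Rightarrow> int" where
  "stirling1_signed n k = (-1) ^ (n - k) * int (stirling n k)"

lemma bernoulli_sanity: "fps_nth (fps_X :: real fps) 1 = 1" by simp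

end

theory Submission
  imports Defs
begin

unbundle fps_syntax

lemma sum_Stirling_Suc:
  fixes a :: "nat \<Rightarrow> real"
  shows "(\<Sum>k\<le>Suc n. a k * real (Stirling (Suc n) k))
       = (\<Sum>k\<le>n. (a k * real k + a (Suc k)) * real (Stirling n k))"
proof -
  have "(\<Sum>k\<le>Suc n. a k * real (Stirling (Suc n) k))
       = (\<Sum>k\<le>n. a (Suc k) * real (Stirling (Suc n) (Suc k)))"
    by (subst sum.atMost_Suc_shift) simp
  also have "\<dots> = (\<Sum>k\<le>n. a (Suc k) * real (Suc k) * real (Stirling n (Suc k)))
                 + (\<Sum>k\<le>n. a (Suc k) * real (Stirling n k))"
    by (simp add: sum.distrib[symmetric] algebra_simps)
  also have "(\<Sum>k\<le>n. a (Suc k) * real (Suc k) * real (Stirling n (Suc k)))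
           = (\<Sum>k\<le>Suc n. a k * real k * real (Stirling n k))"
    by (subst sum.atMost_Suc_shift) simp
  also have "\<dots> = (\<Sum>k\<le>n. a k * real k * real (Stirling n k))"
    by simp
  finally show ?thesis by (simp add: sum.distrib[symmetric] algebra_simps)
qed

lemma binom_sum_Suc:
  fixes f :: "nat \<Rightarrow> real"
  shows "(\<Sum>j\<le>Suc m. real (Suc m choose j) * f j) = (\<Sum>j\<le>m. real (m choose j) * (f j + f (Suc j)))"
proof -
  have "(\<Sum>j\<le>Suc m. real (Suc m choose j) * f j)
      = f 0 + (\<Sum>j\<le>m. real (Suc m choose Suc j) * f (Suc j))"
    by (subst sum.atMost_Suc_shift) simp
  also have "\<dots> = f 0 + (\<Sum>j\<le>m. real (m choose j) * f (Suc j)) + (\<Sum>j\<le>m. real (m choose Suc j) * f (Suc j))"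
    by (simp add: sum.distrib algebra_simps)
  also have "(\<Sum>j\<le>m. real (m choose Suc j) * f (Suc j)) = (\<Sum>j\<le>Suc m. real (m choose j) * f j) - f 0"
    by (subst sum.atMost_Suc_shift) simp
  also have "\<dots> = (\<Sum>j\<le>m. real (m choose j) * f j) - f 0"
    by simp
  finally show ?thesis by (simp add: sum.distrib algebra_simps)
qed

lemma Stirling_0_pos: "n > 0 \<Longrightarrow> Stirling n 0 = 0"
  by (cases n) auto

lemma Stirling_binom:
  "real (Stirling (Suc m) (Suc k)) = (\<Sum>j\<le>m. real (m choose j) * real (Stirling j k))"
proof (induction m arbitrary: k)
  case 0
  then show ?case by (cases k) auto
next
  case (Suc m)
  show ?case
  proof (cases k)
    case 0
    have "(\<Sum>j\<le>Suc m. real (Suc m choose j) * real (Stirling j 0)) = (\<Sum>j\<le>Suc m. if j = 0 then 1 else 0)"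
      by (intro sum.cong) (auto simp: Stirling_0_pos)
    then show ?thesis using 0 by (simp del: Stirling.simps)
  next
    case (Suc k')
    have "real (Stirling (Suc (Suc m)) (Suc k))
        = real (Suc k) * real (Stirling (Suc m) (Suc k)) + real (Stirling (Suc m) k)"
      by (simp only: Stirling.simps of_nat_add of_nat_mult)
    also have "\<dots> = real (Suc k) * (\<Sum>j\<le>m. real (m choose j) * real (Stirling j k))
                  + (\<Sum>j\<le>m. real (m choose j) * real (Stirling j k'))"
      using Suc.IH[of k] Suc.IH[of k'] Suc by (simp del: Stirling.simps)
    also have "\<dots> = (\<Sum>j\<le>m. real (m choose j) * (real (Stirling j k) + real (Stirling (Suc j) k)))"
      using Suc by (simp add: sum_distrib_left sum.distrib[symmetric] algebra_simps)
    also have "\<dots> = (\<Sum>j\<le>Suc m. real (Suc m choose j) * real (Stirling j k))"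
      by (rule binom_sum_Suc[symmetric])
    finally show ?thesis .
  qed
qed

definition LL :: "nat \<Rightarrow> nat \<Rightarrow> real" where
  "LL r n = (\<Sum>k\<le>n. (-1) ^ k * fact k / real (k + r) * real (Stirling n k))"

lemma alt_sum_zero:
  "(\<Sum>k\<le>Suc m. (-1) ^ k * fact k * real (Stirling (Suc m) (Suc k))) = (if m = 0 then 1 else (0::real))"
proof (cases m)
  case 0
  then show ?thesis by simp
next
  case (Suc N)
  define a where "a = (\<lambda>k. if k = 0 then 0 else (-1) ^ (k - 1) * fact (k - 1) :: real)"
  have "(\<Sum>k\<le>Suc (Suc m). a k * real (Stirling (Suc m) k))
      = a 0 * real (Stirling (Suc m) 0) + (\<Sum>k\<le>Suc m. a (Suc k) * real (Stirling (Suc m) (Suc k)))"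
    by (rule sum.atMost_Suc_shift)
  also have "\<dots> = (\<Sum>k\<le>Suc m. (-1) ^ k * fact k * real (Stirling (Suc m) (Suc k)))"
    by (simp add: a_def)
  finally have 1: "(\<Sum>k\<le>Suc m. (-1) ^ k * fact k * real (Stirling (Suc m) (Suc k)))
      = (\<Sum>k\<le>Suc (Suc m). a k * real (Stirling (Suc m) k))" by simp
  also have "\<dots> = (\<Sum>k\<le>Suc m. a k * real (Stirling (Suc m) k))" by simp
  also have "\<dots> = (\<Sum>k\<le>m. (a k * real k + a (Suc k)) * real (Stirling m k))"
    by (rule sum_Stirling_Suc)
  also have "\<dots> = 0"
  proof (intro sum.neutral ballI)
    fix k assume "k \<in> {..m}"
    show "(a k * real k + a (Suc k)) * real (Stirling m k) = 0"
    proof (cases k)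
      case 0
      then show ?thesis using Suc by simp
    next
      case (Suc k')
      then show ?thesis by (simp add: a_def)
    qed
  qed
  finally show ?thesis using Suc by simp
qed

lemma LL1_extend:
  assumes "i \<le> m"
  shows "LL 1 i = (\<Sum>k\<le>m. (-1) ^ k * fact k / real (k + 1) * real (Stirling i k))"
  unfolding LL_def
  by (rule sum.mono_neutral_left) (use assms in auto)

lemma binom_Stirling_inner:
  "(\<Sum>i\<le>m. real (Suc m choose i) * real (Stirling i k)) = real (Suc k) * real (Stirling (Suc m) (Suc k))"
proof -
  have "(\<Sum>i\<le>Suc m. real (Suc m choose i) * real (Stirling i k)) = real (Stirling (Suc (Suc m)) (Suc k))"
    by (rule Stirling_binom[symmetric])
  then have "(\<Sum>i\<le>m. real (Suc m choose i) * real (Stirling i k)) = real (Stirling (Suc (Suc m)) (Suc k)) - real (Stirling (Suc m) k)"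
    by simp
  moreover have "real (Stirling (Suc (Suc m)) (Suc k)) = real (Suc k) * real (Stirling (Suc m) (Suc k)) + real (Stirling (Suc m) k)"
    by (simp only: Stirling.simps of_nat_add of_nat_mult)
  ultimately show ?thesis by linarith
qed

lemma LL1_rec:
  "(\<Sum>i\<le>m. real (Suc m choose i) * LL 1 i) = (if m = 0 then 1 else 0)"
proof -
  have "(\<Sum>i\<le>m. real (Suc m choose i) * LL 1 i)
      = (\<Sum>i\<le>m. \<Sum>k\<le>m. real (Suc m choose i) * ((-1) ^ k * fact k / real (k + 1) * real (Stirling i k)))"
  proof (intro sum.cong refl)
    fix i assume "i \<in> {..m}"
    then show "real (Suc m choose i) * LL 1 i = (\<Sum>k\<le>m. real (Suc m choose i) * ((-1) ^ k * fact k / real (k + 1) * real (Stirling i k)))"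
      using LL1_extend[of i m] by (simp add: sum_distrib_left)
  qed
  also have "\<dots> = (\<Sum>k\<le>m. (-1) ^ k * fact k / real (k + 1) * (\<Sum>i\<le>m. real (Suc m choose i) * real (Stirling i k)))"
    by (subst sum.swap) (simp add: sum_distrib_left algebra_simps)
  also have "\<dots> = (\<Sum>k\<le>m. (-1) ^ k * fact k * real (Stirling (Suc m) (Suc k)))"
    by (intro sum.cong refl) (simp add: binom_Stirling_inner del: Stirling.simps)
  also have "\<dots> = (\<Sum>k\<le>Suc m. (-1) ^ k * fact k * real (Stirling (Suc m) (Suc k)))"
    by simp
  also have "\<dots> = (if m = 0 then 1 else 0)" by (rule alt_sum_zero)
  finally show ?thesis .
qed

lemma bernoulli_LL1: "bernoulli n = LL 1 n"
proof -
  define F where "F = Abs_fps (\<lambda>n. LL 1 n / fact n)"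
  define E where "E = (fps_exp 1 - 1 :: real fps)"
  have Enth: "E $ j = (if j = 0 then 0 else 1 / fact j)" for j
    by (simp add: E_def fps_exp_def)
  have "F * E = fps_X"
  proof (rule fps_ext)
    fix N
    show "(F * E) $ N = fps_X $ N"
    proof (cases N)
      case 0
      then show ?thesis by (simp add: fps_mult_nth Enth)
    next
      case (Suc m)
      have "(F * E) $ N = (\<Sum>i=0..Suc m. LL 1 i / fact i * E $ (Suc m - i))"
        by (simp add: fps_mult_nth F_def Suc)
      also have "\<dots> = (\<Sum>i\<le>Suc m. LL 1 i / fact i * E $ (Suc m - i))"
        by (simp add: atLeast0AtMost)
      also have "\<dots> = (\<Sum>i\<le>m. LL 1 i / fact i * E $ (Suc m - i))"
        by (simp add: Enth mult.commute)
      also have "\<dots> = (\<Sum>i\<le>m. real (Suc m choose i) * LL 1 i / fact (Suc m))"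
      proof (intro sum.cong refl)
        fix i assume "i \<in> {..m}"
        then have i: "i \<le> Suc m" "Suc m - i \<noteq> 0" by auto
        show "LL 1 i / fact i * E $ (Suc m - i) = real (Suc m choose i) * LL 1 i / fact (Suc m)"
          using i by (simp add: Enth binomial_fact)
      qed
      also have "\<dots> = (\<Sum>i\<le>m. real (Suc m choose i) * LL 1 i) / fact (Suc m)"
        by (simp add: sum_divide_distrib)
      also have "\<dots> = fps_X $ N"
        using LL1_rec[of m] by (simp add: Suc split: if_splits)
      finally show ?thesis .
    qed
  qed
  have E0: "E \<noteq> 0"
  proof
    assume "E = 0"
    then have "E $ 1 = 0" by simp
    then show False by (simp add: Enth)
  qed
  have "bernoulli_egf = F"
    unfolding bernoulli_egf_def E_def[symmetric] \<open>F * E = fps_X\<close>[symmetric]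
    using E0 by simp
  then have "bernoulli_egf $ n = F $ n" by simp
  then show ?thesis by (simp add: bernoulli_def F_def)
qed

lemma aux_frac: "(D::real) \<noteq> 0 \<Longrightarrow> c * (1 - (x + 1) / D) = (D - x - 1) * (c / D)"
  by (simp add: field_simps)

lemma aux_frac2: "(s::real) = k + r \<Longrightarrow> s \<noteq> 0 \<Longrightarrow> k + r + 1 \<noteq> 0 \<Longrightarrow>
   c / s * k + - (c * (k + 1)) / (k + r + 1) + r * (c / s) = c * (1 - (k + 1) / (k + r + 1))"
proof -
  assume s: "s = k + r" "s \<noteq> 0" "k + r + 1 \<noteq> 0"
  have "c / s * k + r * (c / s) = (k + r) * c / s" by (simp add: algebra_simps add_divide_distrib)
  also have "\<dots> = c" using s by simp
  finally have 1: "c / s * k + r * (c / s) = c" .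
  have "c / s * k + - (c * (k + 1)) / (k + r + 1) + r * (c / s) = c - (c * (k + 1)) / (k + r + 1)"
    using 1 minus_divide_left[of "c * (k + 1)" "k + r + 1"] by linarith
  then show ?thesis by (simp add: right_diff_distrib)
qed

lemma LL_rec:
  assumes "r \<ge> 1"
  shows "real r * LL (Suc r) n = LL r (Suc n) + real r * LL r n"
proof -
  define a where "a = (\<lambda>k. (-1) ^ k * fact k / real (k + r) :: real)"
  have "LL r (Suc n) = (\<Sum>k\<le>n. (a k * real k + a (Suc k)) * real (Stirling n k))"
    using sum_Stirling_Suc[of a n] unfolding LL_def a_def by simp
  moreover have "real r * LL r n = (\<Sum>k\<le>n. real r * a k * real (Stirling n k))"
    unfolding LL_def a_def by (simp add: sum_distrib_left algebra_simps)
  moreover have "real r * LL (Suc r) n = (\<Sum>k\<le>n. (a k * real k + a (Suc k) + real r * a k) * real (Stirling n k))"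
    unfolding LL_def sum_distrib_left
  proof (intro sum.cong refl)
    fix k
    have pos: "real (k + r) > 0" "real (Suc k + r) > 0" "real (k + Suc r) > 0" using assms by auto
    have d: "real (Suc k + r) = real k + real r + 1" "real (k + Suc r) = real k + real r + 1"
      "real (k + r) = real k + real r" by simp_all
    have nz: "real k + real r + 1 \<noteq> 0" "real k + real r \<noteq> 0" using pos d by linarith+
    have fs: "fact (Suc k) = real (Suc k) * fact k" by simp
    have "a k * real k + a (Suc k) + real r * a k = (-1) ^ k * fact k * (1 - (real k + 1) / (real k + real r + 1))"
    proof -
      have e1: "a k = (-1) ^ k * fact k / (real k + real r)" unfolding a_def d by simp
      have e2: "a (Suc k) = - ((-1) ^ k * fact k * (real k + 1)) / (real k + real r + 1)"
        unfolding a_def d fs by (simp add: algebra_simps)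
      show ?thesis unfolding e1 e2 by (rule aux_frac2[OF refl nz(2) nz(1)])
    qed
    also have "\<dots> = real r * ((-1) ^ k * fact k / real (k + Suc r))"
      unfolding d using aux_frac[OF nz(1)] by simp
    finally show "real r * ((-1) ^ k * fact k / real (k + Suc r) * real (Stirling n k))
        = (a k * real k + a (Suc k) + real r * a k) * real (Stirling n k)" by simp
  qed
  ultimately show ?thesis by (simp add: sum.distrib[symmetric] algebra_simps)
qed

lemma main_aux:
  "LL (Suc q) n = 1 / fact q * (\<Sum>k\<le>q. real (stirling (Suc q) (Suc k)) * bernoulli (n + k))"
proof (induction q arbitrary: n)
  case 0
  then show ?case by (simp add: bernoulli_LL1)
next
  case (Suc q)
  define S1 where "S1 = (\<Sum>k\<le>q. real (stirling (Suc q) (Suc k)) * bernoulli (n + k))"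
  define S2 where "S2 = (\<Sum>k\<le>q. real (stirling (Suc q) (Suc k)) * bernoulli (Suc n + k))"
  have "(\<Sum>k\<le>Suc q. real (stirling (Suc (Suc q)) (Suc k)) * bernoulli (n + k))
      = (\<Sum>k\<le>Suc q. real (Suc q) * (real (stirling (Suc q) (Suc k)) * bernoulli (n + k))
           + real (stirling (Suc q) k) * bernoulli (n + k))"
    by (intro sum.cong refl) (simp only: stirling.simps of_nat_add of_nat_mult algebra_simps)
  also have "\<dots> = real (Suc q) * (\<Sum>k\<le>Suc q. real (stirling (Suc q) (Suc k)) * bernoulli (n + k))
           + (\<Sum>k\<le>Suc q. real (stirling (Suc q) k) * bernoulli (n + k))"
    by (simp add: sum.distrib sum_distrib_left)
  also have "(\<Sum>k\<le>Suc q. real (stirling (Suc q) (Suc k)) * bernoulli (n + k)) = S1"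
    unfolding S1_def by simp
  also have "(\<Sum>k\<le>Suc q. real (stirling (Suc q) k) * bernoulli (n + k)) = S2"
    unfolding S2_def by (subst sum.atMost_Suc_shift) simp
  finally have eq: "(\<Sum>k\<le>Suc q. real (stirling (Suc (Suc q)) (Suc k)) * bernoulli (n + k))
      = real (Suc q) * S1 + S2" .
  have "real (Suc q) * LL (Suc (Suc q)) n = LL (Suc q) (Suc n) + real (Suc q) * LL (Suc q) n"
    by (rule LL_rec) simp
  also have "\<dots> = S2 / fact q + real (Suc q) * (S1 / fact q)"
    using Suc.IH[of n] Suc.IH[of "Suc n"] unfolding S1_def S2_def by simp
  finally have h: "real (Suc q) * LL (Suc (Suc q)) n = S2 / fact q + real (Suc q) * (S1 / fact q)" .
  have fq: "fact q > (0::real)" by simp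
  have "LL (Suc (Suc q)) n = (real (Suc q) * LL (Suc (Suc q)) n) / real (Suc q)"
    by (simp del: of_nat_Suc)
  also have "\<dots> = (S2 / fact q + real (Suc q) * (S1 / fact q)) / real (Suc q)"
    by (simp only: h)
  also have "\<dots> = (real (Suc q) * S1 + S2) / fact (Suc q)"
    using fq by (simp add: field_simps)
  finally have "LL (Suc (Suc q)) n = (real (Suc q) * S1 + S2) / fact (Suc q)" .
  then show ?case using eq by simp
qed

theorem theorem5:
  fixes r n :: nat
  assumes "r \<ge> 1"
  shows "(\<Sum>k\<le>n. (-1) ^ k * fact k / real (k + r) * real (Stirling n k))
       = 1 / fact (r - 1) * (\<Sum>k\<le>r - 1. \<bar>real_of_int (stirling1_signed r (k + 1))\<bar> * bernoulli (n + k))"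
proof -
  obtain q where r: "r = Suc q" using assms by (cases r) auto
  have "\<bar>real_of_int (stirling1_signed r (k + 1))\<bar> = real (stirling r (Suc k))" for k
    by (simp add: stirling1_signed_def abs_mult)
  then show ?thesis
    using main_aux[of q n] unfolding LL_def r by simp
qed

end
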